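(* Let $n$ views be given, view $i$ containing $m_i$ items, and let $l=\sum_{i=1}^n m_i$. Let $\tilde P\in\{0,1\}^{l\times l}$ be a noisy aggregate association matrix (block $(i,j)$ is $\tilde P^i_j\in\{0,1\}^{m_i\times m_j}$, with $\tilde P^i_i=I$), let $\tilde C$ be the diagonal matrix whose $k$-th diagonal entry is the $k$-th row sum of $\tilde P$, let $\tilde L=\tilde C-\tilde P$, $\tilde P_{\mathrm{nrm}}=\tilde C^{-1/2}\tilde P\tilde C^{-1/2}$ and $\tilde L_{\mathrm{nrm}}=\tilde C^{-1/2}\tilde L\tilde C^{-1/2}$. Consider Problem 1: $$\max_{P^i_j\in\mathbb P}\ \langle P_{\mathrm{nrm}},\tilde P_{\mathrm{nrm}}\rangle\quad\text{subject to } P=VV^\top,\ V\in\mathbb V,$$ where $P$ is the aggregate matrix with blocks $P^i_j$, $C$ is the diagonal matrix of row sums of $P$, and $P_{\mathrm{nrm}}=C^{-1/2}PC^{-1/2}$. Then Problem 1 is equivalent to the program $$\min_{U\in\mathbb U}\ \mathrm{tr}\big(U^\top\tilde L_{\mathrm{nrm}}U\big),$$ where $\mathbb U=\{U: U=C^{-1/2}V,\ V\in\mathbb V\}$ (with $C$ the diagonal row-sum matrix of $VV^\top$), in the sense that $V$ is optimal for Problem 1 if and only if $U=C^{-1/2}V$ is optimal for the latter program; moreover every $U\in\mathbb U$ satisfies $U^\top U=I$.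
   Context: A partial permutation matrix is a $0/1$ matrix in which each row and each column contains at most one entry equal to $1$; $\mathbb P$ denotes the set of all such matrices. A lifting permutation matrix $P^i\in\{0,1\}^{m_i\times m}$ is a $0/1$ matrix each of whose rows contains exactly one entry equal to $1$ and each of whose columns contains at most one entry equal to $1$. $\mathbb V$ is the set of matrices $V=[P^{1\top}\ P^{2\top}\ \cdots\ P^{n\top}]^\top\in\{0,1\}^{l\times m}$ with each $P^i$ a lifting permutation matrix, where $m$ (the size of the universe) is the number of distinct items, so that every column of $V$ contains at least one entry equal to $1$. $\langle A,B\rangle=\mathrm{tr}(A^\top B)$ is the Frobenius inner product. *)

theory Defs
  imports "Jordan_Normal_Form.Matrix"
begin

text \<open>Matrices of varying dimensions are Jordan_Normal_Form matrices over the reals.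
  The view sizes m_1..m_n are the list ms, n = length ms, l = sum_list ms.\<close>

definition mtrace :: "real mat \<Rightarrow> real" where
  "mtrace A = (\<Sum>i<dim_row A. A $$ (i, i))"

definition frob :: "real mat \<Rightarrow> real mat \<Rightarrow> real" where
  "frob A B = mtrace (A\<^sup>T * B)"

definition zero_one_mat :: "real mat \<Rightarrow> bool" where
  "zero_one_mat A \<longleftrightarrow> (\<forall>i<dim_row A. \<forall>j<dim_col A. A $$ (i, j) \<in> {0, 1})"

definition partial_perm_mat :: "real mat \<Rightarrow> bool" where
  "partial_perm_mat A \<longleftrightarrow> zero_one_mat A \<and>
     (\<forall>i<dim_row A. card {j. j < dim_col A \<and> A $$ (i, j) = 1} \<le> 1) \<and>
     (\<forall>j<dim_col A. card {i. i < dim_row A \<and> A $$ (i, j) = 1} \<le> 1)"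

definition lifting_perm_mat :: "real mat \<Rightarrow> bool" where
  "lifting_perm_mat A \<longleftrightarrow> zero_one_mat A \<and>
     (\<forall>i<dim_row A. card {j. j < dim_col A \<and> A $$ (i, j) = 1} = 1) \<and>
     (\<forall>j<dim_col A. card {i. i < dim_row A \<and> A $$ (i, j) = 1} \<le> 1)"

definition offs :: "nat list \<Rightarrow> nat \<Rightarrow> nat" where
  "offs ms i = sum_list (take i ms)"

definition blk :: "nat list \<Rightarrow> real mat \<Rightarrow> nat \<Rightarrow> nat \<Rightarrow> real mat" where
  "blk ms A i j = mat (ms ! i) (ms ! j) (\<lambda>(r, c). A $$ (offs ms i + r, offs ms j + c))"

definition rowblk :: "nat list \<Rightarrow> real mat \<Rightarrow> nat \<Rightarrow> real mat" where
  "rowblk ms V i = mat (ms ! i) (dim_col V) (\<lambda>(r, c). V $$ (offs ms i + r, c))"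

definition in_VV :: "nat list \<Rightarrow> nat \<Rightarrow> real mat \<Rightarrow> bool" where
  "in_VV ms m V \<longleftrightarrow> dim_row V = sum_list ms \<and> dim_col V = m \<and>
     (\<forall>i<length ms. lifting_perm_mat (rowblk ms V i)) \<and>
     (\<forall>c<m. \<exists>k<dim_row V. V $$ (k, c) = 1)"

definition rowsum_diag :: "real mat \<Rightarrow> real mat" where
  "rowsum_diag A = mat (dim_row A) (dim_row A)
     (\<lambda>(i, j). if i = j then (\<Sum>k<dim_col A. A $$ (i, k)) else 0)"

definition diag_inv_sqrt :: "real mat \<Rightarrow> real mat" where
  "diag_inv_sqrt C = mat (dim_row C) (dim_row C)
     (\<lambda>(i, j). if i = j then 1 / sqrt (C $$ (i, i)) else 0)"

definition nrm :: "real mat \<Rightarrow> real mat" where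
  "nrm A = diag_inv_sqrt (rowsum_diag A) * A * diag_inv_sqrt (rowsum_diag A)"

definition lap_nrm :: "real mat \<Rightarrow> real mat" where
  "lap_nrm A = diag_inv_sqrt (rowsum_diag A) * (rowsum_diag A - A) * diag_inv_sqrt (rowsum_diag A)"

definition U_of :: "real mat \<Rightarrow> real mat" where
  "U_of V = diag_inv_sqrt (rowsum_diag (V * V\<^sup>T)) * V"

definition UU :: "nat list \<Rightarrow> nat \<Rightarrow> real mat set" where
  "UU ms m = {U_of V | V. in_VV ms m V}"

definition feasible1 :: "nat list \<Rightarrow> nat \<Rightarrow> real mat \<Rightarrow> bool" where
  "feasible1 ms m V \<longleftrightarrow> in_VV ms m V \<and>
     (\<forall>i<length ms. \<forall>j<length ms. partial_perm_mat (blk ms (V * V\<^sup>T) i j))"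

definition obj1 :: "real mat \<Rightarrow> real mat \<Rightarrow> real" where
  "obj1 Pt V = frob (nrm (V * V\<^sup>T)) (nrm Pt)"

definition obj2 :: "real mat \<Rightarrow> real mat \<Rightarrow> real" where
  "obj2 Pt U = mtrace (U\<^sup>T * lap_nrm Pt * U)"

end

theory Submission
  imports Defs
begin

lemma offs_Cons0: "offs (a # ms) 0 = 0" by (simp add: offs_def)
lemma offs_ConsS: "offs (a # ms) (Suc i) = a + offs ms i" by (simp add: offs_def)

lemma block_of: "k < sum_list ms \<Longrightarrow> \<exists>i<length ms. offs ms i \<le> k \<and> k < offs ms i + ms ! i"
proof (induction ms arbitrary: k)
  case Nil then show ?case by simp
next
  case (Cons a ms)
  show ?case
  proof (cases "k < a")
    case True then show ?thesis by (intro exI[of _ 0]) (simp add: offs_Cons0)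
  next
    case False
    then have "k - a < sum_list ms" using Cons.prems by simp
    from Cons.IH[OF this] obtain i where "i < length ms" "offs ms i \<le> k - a" "k - a < offs ms i + ms ! i" by blast
    then show ?thesis using False by (intro exI[of _ "Suc i"]) (auto simp add: offs_ConsS)
  qed
qed

lemma offs_bound: "i < length ms \<Longrightarrow> offs ms i + ms ! i \<le> sum_list ms"
proof (induction ms arbitrary: i)
  case Nil then show ?case by simp
next
  case (Cons a ms) then show ?case by (cases i) (auto simp: offs_Cons0 offs_ConsS)
qed

definition vform :: "nat \<Rightarrow> nat \<Rightarrow> (nat \<Rightarrow> nat) \<Rightarrow> real mat \<Rightarrow> bool" where
  "vform l m f W \<longleftrightarrow> W = mat l m (\<lambda>(k, c). if c = f k then 1 else 0) \<and>
     (\<forall>k<l. f k < m) \<and> (\<forall>c<m. \<exists>k<l. f k = c)"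

lemma rowblk_idx: "r < ms ! i \<Longrightarrow> c < dim_col V \<Longrightarrow> rowblk ms V i $$ (r, c) = V $$ (offs ms i + r, c)"
  by (simp add: rowblk_def)

lemma in_VV_row:
  assumes V: "in_VV ms m V" and k: "k < sum_list ms"
  shows "(\<forall>c<m. V $$ (k, c) \<in> {0, 1}) \<and> card {c. c < m \<and> V $$ (k, c) = 1} = 1"
proof -
  from block_of[OF k] obtain i where i: "i < length ms" "offs ms i \<le> k" "k < offs ms i + ms ! i" by blast
  define r where "r = k - offs ms i"
  have r: "r < ms ! i" "k = offs ms i + r" using i by (auto simp: r_def)
  have L: "lifting_perm_mat (rowblk ms V i)" using V i by (simp add: in_VV_def)
  have dims: "dim_row (rowblk ms V i) = ms ! i" "dim_col (rowblk ms V i) = m" "dim_col V = m"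
    using V by (auto simp: rowblk_def in_VV_def)
  have "\<forall>c<m. V $$ (k, c) \<in> {0, 1}"
  proof (intro allI impI)
    fix c assume c: "c < m"
    have "rowblk ms V i $$ (r, c) \<in> {0, 1}" using L r dims c by (auto simp: lifting_perm_mat_def zero_one_mat_def)
    then show "V $$ (k, c) \<in> {0, 1}" using rowblk_idx[of r ms i c V] r c dims by simp
  qed
  moreover have "{c. c < m \<and> V $$ (k, c) = 1} = {j. j < dim_col (rowblk ms V i) \<and> rowblk ms V i $$ (r, j) = 1}"
    using r dims by (auto simp: rowblk_idx)
  moreover have "card {j. j < dim_col (rowblk ms V i) \<and> rowblk ms V i $$ (r, j) = 1} = 1"
    using L r dims by (auto simp: lifting_perm_mat_def)
  ultimately show ?thesis by simp
qed

lemma in_VV_vform: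
  assumes V: "in_VV ms m V"
  shows "\<exists>f. vform (sum_list ms) m f V"
proof -
  define f where "f k = (SOME c. c < m \<and> V $$ (k, c) = 1)" for k
  have f: "f k < m \<and> V $$ (k, f k) = 1 \<and> (\<forall>c<m. V $$ (k, c) = (if c = f k then 1 else 0))"
    if k: "k < sum_list ms" for k
  proof -
    from in_VV_row[OF V k] have z: "\<forall>c<m. V $$ (k, c) \<in> {0, 1}"
      and cd: "card {c. c < m \<and> V $$ (k, c) = 1} = 1" by auto
    from cd obtain c0 where c0: "{c. c < m \<and> V $$ (k, c) = 1} = {c0}" by (rule card_1_singletonE)
    have fk: "f k = c0" unfolding f_def using c0 by (intro some_equality) auto
    show ?thesis using c0 z fk by auto
  qed
  have "V = mat (sum_list ms) m (\<lambda>(k, c). if c = f k then 1 else 0)"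
    using V f by (intro eq_matI) (auto simp: in_VV_def)
  moreover have "\<forall>c<m. \<exists>k<sum_list ms. f k = c"
  proof (intro allI impI)
    fix c assume c: "c < m"
    then obtain k where k: "k < dim_row V" "V $$ (k, c) = 1" using V by (auto simp: in_VV_def)
    have "k < sum_list ms" using k V by (simp add: in_VV_def)
    then show "\<exists>k<sum_list ms. f k = c" using f[of k] k c by (metis zero_neq_one)
  qed
  ultimately show ?thesis using f by (auto simp: vform_def)
qed

definition cnt :: "nat \<Rightarrow> (nat \<Rightarrow> nat) \<Rightarrow> nat \<Rightarrow> nat" where
  "cnt l f c = card {k. k < l \<and> f k = c}"

lemma vform_carrier: "vform l m f W \<Longrightarrow> W \<in> carrier_mat l m"
  by (simp add: vform_def)

lemma vform_WWT:
  assumes "vform l m f W"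
  shows "W * W\<^sup>T = mat l l (\<lambda>(k, k'). if f k = f k' then 1 else 0)"
proof (rule eq_matI)
  fix k k' assume kk: "k < dim_row (mat l l (\<lambda>(k, k'). if f k = f k' then 1 else 0 :: real))"
     "k' < dim_col (mat l l (\<lambda>(k, k'). if f k = f k' then 1 else 0 :: real))"
  have fk: "f k < m" using assms kk by (simp add: vform_def)
  have "(W * W\<^sup>T) $$ (k, k') = (\<Sum>c\<in>{0..<m}. (if c = f k then 1 else 0) * (if c = f k' then 1 else 0 :: real))"
    using assms kk by (simp add: vform_def scalar_prod_def)
  also have "\<dots> = (\<Sum>c\<in>{0..<m}. if c = f k then (if f k = f k' then 1 else 0) else 0)"
    by (rule sum.cong) auto
  also have "\<dots> = (if f k = f k' then 1 else 0)" using fk by simp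
  finally show "(W * W\<^sup>T) $$ (k, k') = mat l l (\<lambda>(k, k'). if f k = f k' then 1 else 0 :: real) $$ (k, k')"
    using kk by simp
qed (use assms in \<open>auto simp: vform_def\<close>)

lemma vform_rowsum:
  assumes "vform l m f W"
  shows "rowsum_diag (W * W\<^sup>T) = mat l l (\<lambda>(i, j). if i = j then real (cnt l f (f i)) else 0)"
proof -
  have "(\<Sum>k'<l. (if f k = f k' then 1 else 0 :: real)) = real (cnt l f (f k))" for k
  proof -
    have "(\<Sum>k'<l. (if f k = f k' then 1 else 0 :: real)) = (\<Sum>k'\<in>{k'\<in>{..<l}. f k' = f k}. 1)"
      by (subst sum.inter_filter) (auto intro: sum.cong)
    also have "\<dots> = real (card {k'\<in>{..<l}. f k' = f k})" by simp
    also have "{k'\<in>{..<l}. f k' = f k} = {k'. k' < l \<and> f k' = f k}" by auto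
    finally show ?thesis by (simp add: cnt_def)
  qed
  then show ?thesis unfolding vform_WWT[OF assms] rowsum_diag_def
    by (intro eq_matI) auto
qed

lemma cnt_pos: "vform l m f W \<Longrightarrow> c < m \<Longrightarrow> cnt l f c \<ge> 1"
proof -
  assume v: "vform l m f W" and c: "c < m"
  then obtain k where "k < l" "f k = c" by (auto simp: vform_def)
  then have "k \<in> {k. k < l \<and> f k = c}" by simp
  moreover have "finite {k. k < l \<and> f k = c}" by simp
  ultimately show ?thesis unfolding cnt_def
    by (metis One_nat_def Suc_leI card_gt_0_iff empty_iff)
qed

lemma vform_D:
  assumes "vform l m f W"
  shows "diag_inv_sqrt (rowsum_diag (W * W\<^sup>T)) = mat l l (\<lambda>(i, j). if i = j then 1 / sqrt (real (cnt l f (f i))) else 0)"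
  unfolding vform_rowsum[OF assms] diag_inv_sqrt_def by (intro eq_matI) auto

lemma vform_U:
  assumes v: "vform l m f W"
  shows "U_of W = mat l m (\<lambda>(k, c). if c = f k then 1 / sqrt (real (cnt l f (f k))) else 0)"
proof (rule eq_matI)
  fix k c assume kc: "k < dim_row (mat l m (\<lambda>(k, c). if c = f k then 1 / sqrt (real (cnt l f (f k))) else 0))"
    "c < dim_col (mat l m (\<lambda>(k, c). if c = f k then 1 / sqrt (real (cnt l f (f k))) else 0))"
  have "U_of W $$ (k, c) = (\<Sum>j\<in>{0..<l}. (if k = j then 1 / sqrt (real (cnt l f (f k))) else 0) * (if c = f j then 1 else 0))"
    using kc v unfolding U_of_def vform_D[OF v] by (simp add: vform_def scalar_prod_def)
  also have "\<dots> = (\<Sum>j\<in>{0..<l}. if k = j then (1 / sqrt (real (cnt l f (f k)))) * (if c = f k then 1 else 0) else 0)"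
    by (rule sum.cong) auto
  also have "\<dots> = (if c = f k then 1 / sqrt (real (cnt l f (f k))) else 0)" using kc by simp
  finally show "U_of W $$ (k, c) = mat l m (\<lambda>(k, c). if c = f k then 1 / sqrt (real (cnt l f (f k))) else 0) $$ (k, c)"
    using kc by simp
qed (use v in \<open>auto simp: vform_def U_of_def diag_inv_sqrt_def rowsum_diag_def\<close>)

lemma vform_UTU:
  assumes v: "vform l m f W"
  shows "(U_of W)\<^sup>T * U_of W = 1\<^sub>m m"
proof (rule eq_matI)
  fix c c' assume cc: "c < dim_row (1\<^sub>m m :: real mat)" "c' < dim_col (1\<^sub>m m :: real mat)"
  have "((U_of W)\<^sup>T * U_of W) $$ (c, c') = (\<Sum>k\<in>{0..<l}. (if c = f k then 1 / sqrt (real (cnt l f (f k))) else 0) * (if c' = f k then 1 / sqrt (real (cnt l f (f k))) else 0))"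
    using cc unfolding vform_U[OF v] by (simp add: scalar_prod_def)
  also have "\<dots> = (\<Sum>k\<in>{0..<l}. if f k = c then (if c = c' then 1 / real (cnt l f c) else 0) else 0)"
  proof (rule sum.cong)
    fix k assume "k \<in> {0..<l}"
    have "cnt l f c \<ge> 1" using cnt_pos[OF v] cc by simp
    then show "(if c = f k then 1 / sqrt (real (cnt l f (f k))) else 0) * (if c' = f k then 1 / sqrt (real (cnt l f (f k))) else 0) = (if f k = c then (if c = c' then 1 / real (cnt l f c) else 0) else 0)"
      by (auto simp: real_sqrt_mult[symmetric])
  qed simp
  also have "\<dots> = (if c = c' then 1 else 0)"
  proof (cases "c = c'")
    case True
    have "(\<Sum>k\<in>{0..<l}. if f k = c then 1 / real (cnt l f c) else 0) = (\<Sum>k\<in>{k\<in>{0..<l}. f k = c}. 1 / real (cnt l f c))"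
      by (subst sum.inter_filter) auto
    also have "\<dots> = real (card {k\<in>{0..<l}. f k = c}) * (1 / real (cnt l f c))" by simp
    also have "{k\<in>{0..<l}. f k = c} = {k. k < l \<and> f k = c}" by auto
    finally have "(\<Sum>k\<in>{0..<l}. if f k = c then 1 / real (cnt l f c) else 0) = 1"
      using cnt_pos[OF v, of c] cc v by (simp add: cnt_def vform_def)
    then show ?thesis using True by simp
  qed simp
  finally show "((U_of W)\<^sup>T * U_of W) $$ (c, c') = 1\<^sub>m m $$ (c, c')" using cc by simp
qed (simp_all add: vform_U[OF v])

lemma in_VV_feasible:
  assumes V: "in_VV ms m W"
  shows "feasible1 ms m W"
proof -
  obtain f where v: "vform (sum_list ms) m f W" using in_VV_vform[OF V] by blast
  let ?l = "sum_list ms"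
  have Wi: "W $$ (k, c) = (if c = f k then 1 else 0)" if "k < ?l" "c < m" for k c
    using v that by (simp add: vform_def)
  have fm: "f k < m" if "k < ?l" for k using v that by (simp add: vform_def)
  have dW: "dim_col W = m" "dim_row W = ?l" using v by (auto simp: vform_def)
  have rb: "rowblk ms W j $$ (s, c) = (if c = f (offs ms j + s) then 1 else 0)"
    if "j < length ms" "s < ms ! j" "c < m" for j s c
    using that offs_bound[of j ms] dW by (simp add: rowblk_idx Wi)
  have colc: "card {s. s < ms ! j \<and> c = f (offs ms j + s)} \<le> 1" if "j < length ms" "c < m" for j c
  proof -
    have L: "lifting_perm_mat (rowblk ms W j)" using V that by (simp add: in_VV_def)
    have "card {s. s < dim_row (rowblk ms W j) \<and> rowblk ms W j $$ (s, c) = 1} \<le> 1"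
      using L that dW by (auto simp: lifting_perm_mat_def rowblk_def)
    moreover have "{s. s < dim_row (rowblk ms W j) \<and> rowblk ms W j $$ (s, c) = 1} = {s. s < ms ! j \<and> c = f (offs ms j + s)}"
    proof -
      have dr: "dim_row (rowblk ms W j) = ms ! j" by (simp add: rowblk_def)
      show ?thesis unfolding dr using rb[OF that(1) _ that(2)] by (auto split: if_splits)
    qed
    ultimately show ?thesis by simp
  qed
  have B: "blk ms (W * W\<^sup>T) i j = mat (ms ! i) (ms ! j) (\<lambda>(r, s). if f (offs ms i + r) = f (offs ms j + s) then 1 else 0)"
    if "i < length ms" "j < length ms" for i j
    unfolding blk_def vform_WWT[OF v] using that offs_bound[of i ms] offs_bound[of j ms]
    by (intro eq_matI) auto
  have "partial_perm_mat (blk ms (W * W\<^sup>T) i j)" if ij: "i < length ms" "j < length ms" for i j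
  proof -
    have r: "card {s. s < ms ! j \<and> f (offs ms i + r) = f (offs ms j + s)} \<le> 1" if "r < ms ! i" for r
      using colc[OF ij(2) fm[of "offs ms i + r"]] that offs_bound[OF ij(1)] by simp
    have c: "card {r. r < ms ! i \<and> f (offs ms i + r) = f (offs ms j + s)} \<le> 1" if "s < ms ! j" for s
    proof -
      have "{r. r < ms ! i \<and> f (offs ms i + r) = f (offs ms j + s)} = {r. r < ms ! i \<and> f (offs ms j + s) = f (offs ms i + r)}" by auto
      then show ?thesis using colc[OF ij(1) fm[of "offs ms j + s"]] that offs_bound[OF ij(2)] by simp
    qed
    let ?M = "mat (ms ! i) (ms ! j) (\<lambda>(r, s). if f (offs ms i + r) = f (offs ms j + s) then 1 else 0 :: real)"
    have r': "card {s. s < dim_col ?M \<and> ?M $$ (r, s) = 1} \<le> 1" if "r < dim_row ?M" for r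
    proof -
      have "{s. s < dim_col ?M \<and> ?M $$ (r, s) = 1} = {s. s < ms ! j \<and> f (offs ms i + r) = f (offs ms j + s)}"
        using that by (auto split: if_splits)
      then show ?thesis using r that by simp
    qed
    have c': "card {r. r < dim_row ?M \<and> ?M $$ (r, s) = 1} \<le> 1" if "s < dim_col ?M" for s
    proof -
      have "{r. r < dim_row ?M \<and> ?M $$ (r, s) = 1} = {r. r < ms ! i \<and> f (offs ms i + r) = f (offs ms j + s)}"
        using that by (auto split: if_splits)
      then show ?thesis using c that by simp
    qed
    show ?thesis unfolding B[OF ij] partial_perm_mat_def zero_one_mat_def
      using r' c' by (intro conjI allI impI) auto
  qed
  then show ?thesis using V by (simp add: feasible1_def)
qed

lemma diag_left:
  assumes "A \<in> carrier_mat n n" "B \<in> carrier_mat n p" "\<forall>i j. i < n \<longrightarrow> j < n \<longrightarrow> i \<noteq> j \<longrightarrow> A $$ (i, j) = 0"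
    "i < n" "j < p"
  shows "(A * B) $$ (i, j) = A $$ (i, i) * B $$ (i, j)"
proof -
  have "(A * B) $$ (i, j) = (\<Sum>k\<in>{0..<n}. A $$ (i, k) * B $$ (k, j))"
    using assms by (simp add: scalar_prod_def)
  also have "\<dots> = (\<Sum>k\<in>{0..<n}. if k = i then A $$ (i, i) * B $$ (i, j) else 0)"
    using assms by (intro sum.cong) auto
  finally show ?thesis using assms by simp
qed

lemma diag_right:
  assumes "A \<in> carrier_mat n n" "B \<in> carrier_mat p n" "\<forall>i j. i < n \<longrightarrow> j < n \<longrightarrow> i \<noteq> j \<longrightarrow> A $$ (i, j) = 0"
    "i < p" "j < n"
  shows "(B * A) $$ (i, j) = B $$ (i, j) * A $$ (j, j)"
proof -
  have "(B * A) $$ (i, j) = (\<Sum>k\<in>{0..<n}. B $$ (i, k) * A $$ (k, j))"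
    using assms by (simp add: scalar_prod_def)
  also have "\<dots> = (\<Sum>k\<in>{0..<n}. if k = j then B $$ (i, j) * A $$ (j, j) else 0)"
    using assms by (intro sum.cong) auto
  finally show ?thesis using assms by simp
qed

lemma lap_nrm_eq:
  assumes Pt: "Pt \<in> carrier_mat l l" and pos: "\<forall>k<l. (\<Sum>j<l. Pt $$ (k, j)) > 0"
  shows "lap_nrm Pt = 1\<^sub>m l - nrm Pt"
proof -
  define R where "R = rowsum_diag Pt"
  define E where "E = diag_inv_sqrt R"
  have R: "R \<in> carrier_mat l l" using Pt by (simp add: R_def rowsum_diag_def)
  have E: "E \<in> carrier_mat l l" using R by (simp add: E_def diag_inv_sqrt_def)
  have Rd: "\<forall>i j. i < l \<longrightarrow> j < l \<longrightarrow> i \<noteq> j \<longrightarrow> R $$ (i, j) = 0" using Pt by (simp add: R_def rowsum_diag_def)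
  have Ed: "\<forall>i j. i < l \<longrightarrow> j < l \<longrightarrow> i \<noteq> j \<longrightarrow> E $$ (i, j) = 0" using R by (simp add: E_def diag_inv_sqrt_def)
  have ERE: "E * R * E = 1\<^sub>m l"
  proof (rule eq_matI)
    fix i j assume ij: "i < dim_row (1\<^sub>m l :: real mat)" "j < dim_col (1\<^sub>m l :: real mat)"
    have ER: "E * R \<in> carrier_mat l l" using E R by simp
    have "(E * R * E) $$ (i, j) = (E * R) $$ (i, j) * E $$ (j, j)"
      using diag_right[OF E ER Ed] ij by simp
    also have "\<dots> = E $$ (i, i) * R $$ (i, j) * E $$ (j, j)"
      using diag_left[OF E R Ed] ij by simp
    also have "\<dots> = (if i = j then 1 else 0)"
    proof (cases "i = j")
      case True
      have r: "R $$ (i, i) = (\<Sum>k<l. Pt $$ (i, k))" using Pt ij by (simp add: R_def rowsum_diag_def)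
      have "R $$ (i, i) > 0" using pos ij r by simp
      moreover have "E $$ (i, i) = 1 / sqrt (R $$ (i, i))" using R ij by (simp add: E_def diag_inv_sqrt_def)
      moreover have "sqrt (R $$ (i, i)) * sqrt (R $$ (i, i)) = R $$ (i, i)"
        using \<open>R $$ (i, i) > 0\<close> by simp
      ultimately have "E $$ (i, i) * R $$ (i, i) * E $$ (i, i) = R $$ (i, i) / (sqrt (R $$ (i, i)) * sqrt (R $$ (i, i)))"
        by simp
      also have "\<dots> = 1" using \<open>sqrt (R $$ (i, i)) * sqrt (R $$ (i, i)) = R $$ (i, i)\<close> \<open>R $$ (i, i) > 0\<close> by simp
      finally show ?thesis using True by simp
    qed (use Rd ij in auto)
    finally show "(E * R * E) $$ (i, j) = 1\<^sub>m l $$ (i, j)" using ij by simp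
  qed (use E R in auto)
  have nPt: "nrm Pt = E * Pt * E" by (simp add: nrm_def E_def R_def)
  have "lap_nrm Pt = E * (R - Pt) * E" by (simp add: lap_nrm_def E_def R_def)
  also have "\<dots> = (E * R - E * Pt) * E" using E R Pt by (simp add: mult_minus_distrib_mat)
  also have "\<dots> = E * R * E - E * Pt * E" using E R Pt by (simp add: minus_mult_distrib_mat[of _ l l _ _ l])
  also have "\<dots> = 1\<^sub>m l - nrm Pt" using nPt by (simp add: ERE)
  finally show ?thesis .
qed

lemma mtrace_cyc:
  assumes "A \<in> carrier_mat n k" "B \<in> carrier_mat k n"
  shows "mtrace (A * B) = mtrace (B * A)"
proof -
  have "mtrace (A * B) = (\<Sum>i<n. \<Sum>j<k. A $$ (i, j) * B $$ (j, i))"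
    using assms by (simp add: mtrace_def scalar_prod_def atLeast0LessThan)
  also have "\<dots> = (\<Sum>j<k. \<Sum>i<n. B $$ (j, i) * A $$ (i, j))"
    by (subst sum.swap) (simp add: mult.commute)
  also have "\<dots> = mtrace (B * A)"
    using assms by (simp add: mtrace_def scalar_prod_def atLeast0LessThan)
  finally show ?thesis .
qed

lemma mtrace_minus:
  assumes "A \<in> carrier_mat n n" "B \<in> carrier_mat n n"
  shows "mtrace (A - B) = mtrace A - mtrace B"
  using assms by (simp add: mtrace_def sum_subtractf)

lemma mtrace_one: "mtrace (1\<^sub>m n) = real n"
  by (simp add: mtrace_def)

lemma obj_rel:
  assumes v: "vform l m f W" and Pt: "Pt \<in> carrier_mat l l" and L: "lap_nrm Pt = 1\<^sub>m l - nrm Pt"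
  shows "obj1 Pt W = real m - obj2 Pt (U_of W)"
proof -
  define D where "D = diag_inv_sqrt (rowsum_diag (W * W\<^sup>T))"
  define U where "U = U_of W"
  define Pn where "Pn = nrm Pt"
  have W: "W \<in> carrier_mat l m" using v by (simp add: vform_def)
  have D: "D \<in> carrier_mat l l" unfolding D_def vform_D[OF v] by simp
  have DT: "D\<^sup>T = D" unfolding D_def vform_D[OF v] by (intro eq_matI) auto
  have UD: "U = D * W" by (simp add: U_def U_of_def D_def)
  have U: "U \<in> carrier_mat l m" using UD D W by simp
  have Ec: "diag_inv_sqrt (rowsum_diag Pt) \<in> carrier_mat l l" using Pt by (simp add: diag_inv_sqrt_def rowsum_diag_def)
  have Pn: "Pn \<in> carrier_mat l l" unfolding Pn_def nrm_def using Ec Pt by (meson mult_carrier_mat)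
  have UTU: "U\<^sup>T * U = 1\<^sub>m m" using vform_UTU[OF v] by (simp add: U_def)
  have WT: "W\<^sup>T \<in> carrier_mat m l" using W by simp
  have "U * U\<^sup>T = (D * W) * (W\<^sup>T * D)"
    using transpose_mult[OF D W] DT UD by simp
  also have "\<dots> = D * (W * (W\<^sup>T * D))" using D W WT by (simp add: assoc_mult_mat[of _ l l _ m _ l])
  also have "\<dots> = D * ((W * W\<^sup>T) * D)" using D W WT by (simp add: assoc_mult_mat[of _ l m _ l _ l])
  also have "\<dots> = (D * (W * W\<^sup>T)) * D" using D W WT by (simp add: assoc_mult_mat[of _ l l _ l _ l])
  also have "\<dots> = nrm (W * W\<^sup>T)" by (simp add: nrm_def D_def)
  finally have N: "nrm (W * W\<^sup>T) = U * U\<^sup>T" by simp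
  have UUT: "(U * U\<^sup>T)\<^sup>T = U * U\<^sup>T" using transpose_mult[OF U, of "U\<^sup>T" l] U by simp
  have "obj1 Pt W = mtrace ((U * U\<^sup>T) * Pn)"
    by (simp add: obj1_def frob_def N UUT Pn_def)
  also have "\<dots> = mtrace (U * (U\<^sup>T * Pn))" using U Pn by (simp add: assoc_mult_mat[of _ l m _ l _ l])
  also have "\<dots> = mtrace ((U\<^sup>T * Pn) * U)" using U Pn by (intro mtrace_cyc[of _ l m]) auto
  finally have O1: "obj1 Pt W = mtrace (U\<^sup>T * Pn * U)" .
  have "U\<^sup>T * lap_nrm Pt * U = U\<^sup>T * (1\<^sub>m l - Pn) * U" by (simp add: L Pn_def)
  also have "\<dots> = (U\<^sup>T * 1\<^sub>m l - U\<^sup>T * Pn) * U" using U Pn by (simp add: mult_minus_distrib_mat[of _ m l _ l])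
  also have "\<dots> = (U\<^sup>T - U\<^sup>T * Pn) * U" using U by simp
  also have "\<dots> = U\<^sup>T * U - U\<^sup>T * Pn * U" using U Pn by (simp add: minus_mult_distrib_mat[of _ m l _ _ m])
  also have "\<dots> = 1\<^sub>m m - U\<^sup>T * Pn * U" by (simp add: UTU)
  finally have "obj2 Pt U = mtrace (1\<^sub>m m - U\<^sup>T * Pn * U)" by (simp add: obj2_def)
  also have "\<dots> = real m - mtrace (U\<^sup>T * Pn * U)" using U Pn by (simp add: mtrace_minus[of _ m] mtrace_one)
  finally show ?thesis using O1 by (simp add: U_def)
qed

theorem proposition2:
  fixes ms :: "nat list" and m :: nat and Pt V :: "real mat"
  assumes Pt_dim: "Pt \<in> carrier_mat (sum_list ms) (sum_list ms)"
    and Pt_01: "zero_one_mat Pt"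
    and Pt_diag: "\<forall>i<length ms. blk ms Pt i i = 1\<^sub>m (ms ! i)"
    and V: "in_VV ms m V"
  shows "((feasible1 ms m V \<and> (\<forall>W. feasible1 ms m W \<longrightarrow> obj1 Pt W \<le> obj1 Pt V))
           \<longleftrightarrow> (U_of V \<in> UU ms m \<and> (\<forall>U'\<in>UU ms m. obj2 Pt (U_of V) \<le> obj2 Pt U')))
         \<and> (\<forall>U\<in>UU ms m. U\<^sup>T * U = 1\<^sub>m m)"
proof -
  let ?l = "sum_list ms"
  have pos: "\<forall>k<?l. (\<Sum>j<?l. Pt $$ (k, j)) > 0"
  proof (intro allI impI)
    fix k assume k: "k < ?l"
    from block_of[OF k] obtain i where i: "i < length ms" "offs ms i \<le> k" "k < offs ms i + ms ! i" by blast
    define r where "r = k - offs ms i"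
    have r: "r < ms ! i" "k = offs ms i + r" using i by (auto simp: r_def)
    have "blk ms Pt i i $$ (r, r) = 1" using Pt_diag i r by simp
    then have kk: "Pt $$ (k, k) = 1" using r by (simp add: blk_def)
    have nn: "\<forall>j<?l. Pt $$ (k, j) \<ge> 0"
    proof (intro allI impI)
      fix j assume j: "j < ?l"
      then have "Pt $$ (k, j) \<in> {0, 1}" using Pt_01 Pt_dim k by (auto simp: zero_one_mat_def)
      then show "Pt $$ (k, j) \<ge> 0" by auto
    qed
    have "Pt $$ (k, k) \<le> (\<Sum>j<?l. Pt $$ (k, j))"
      by (rule member_le_sum) (use k nn in auto)
    then show "(\<Sum>j<?l. Pt $$ (k, j)) > 0" using kk by simp
  qed
  have L: "lap_nrm Pt = 1\<^sub>m ?l - nrm Pt" by (rule lap_nrm_eq[OF Pt_dim pos])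
  have rel: "obj1 Pt W = real m - obj2 Pt (U_of W)" if WV: "in_VV ms m W" for W
  proof -
    obtain f where "vform ?l m f W" using in_VV_vform[OF WV] by blast
    then show ?thesis using obj_rel Pt_dim L by blast
  qed
  have feas: "feasible1 ms m W \<longleftrightarrow> in_VV ms m W" for W
    using in_VV_feasible[of ms m W] by (auto simp: feasible1_def)
  have part2: "\<forall>U\<in>UU ms m. U\<^sup>T * U = 1\<^sub>m m"
  proof
    fix U assume "U \<in> UU ms m"
    then obtain W where W: "in_VV ms m W" "U = U_of W" by (auto simp: UU_def)
    obtain f where "vform ?l m f W" using in_VV_vform[OF W(1)] by blast
    then show "U\<^sup>T * U = 1\<^sub>m m" using vform_UTU W(2) by blast
  qed
  have UV: "U_of V \<in> UU ms m" using V by (auto simp: UU_def)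
  have "(\<forall>W. feasible1 ms m W \<longrightarrow> obj1 Pt W \<le> obj1 Pt V) \<longleftrightarrow> (\<forall>U'\<in>UU ms m. obj2 Pt (U_of V) \<le> obj2 Pt U')"
  proof
    assume H: "\<forall>W. feasible1 ms m W \<longrightarrow> obj1 Pt W \<le> obj1 Pt V"
    show "\<forall>U'\<in>UU ms m. obj2 Pt (U_of V) \<le> obj2 Pt U'"
    proof
      fix U' assume "U' \<in> UU ms m"
      then obtain W where W: "in_VV ms m W" "U' = U_of W" by (auto simp: UU_def)
      have "obj1 Pt W \<le> obj1 Pt V" using H W feas by blast
      then show "obj2 Pt (U_of V) \<le> obj2 Pt U'" using rel[OF W(1)] rel[OF V] W(2) by simp
    qed
  next
    assume H: "\<forall>U'\<in>UU ms m. obj2 Pt (U_of V) \<le> obj2 Pt U'"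
    show "\<forall>W. feasible1 ms m W \<longrightarrow> obj1 Pt W \<le> obj1 Pt V"
    proof (intro allI impI)
      fix W assume "feasible1 ms m W"
      then have W: "in_VV ms m W" using feas by simp
      then have "U_of W \<in> UU ms m" by (auto simp: UU_def)
      then have "obj2 Pt (U_of V) \<le> obj2 Pt (U_of W)" using H by blast
      then show "obj1 Pt W \<le> obj1 Pt V" using rel[OF W] rel[OF V] by simp
    qed
  qed
  then show ?thesis using part2 UV feas V by blast
qed

end
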